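(* Let $a$ and $b$ be real constants with $a>b>0$. There is a constant $C_0>0$ such that for every $j\in\mathbb{Z}_+$, every $R\ge C_0(j+1)$ and every $\rho>0$, $$\int_{R}^{+\infty}\frac{1}{\tau^{j}}e^{-a|\rho-\tau|-b\tau}\,d\tau\le\left(\frac1a+\frac{2}{a-b}\right)\frac{e^{-b\rho}}{\rho^{j}}.$$ *)

theory Defs
  imports "HOL-Analysis.Analysis"
begin

end

theory Submission
  imports Defs
begin

lemma piece1:
  assumes "a > 0"
  shows "((\<lambda>t::real. exp (- a * (t - r))) has_integral 1 / a) {r..}"
proof -
  have "((\<lambda>t::real. exp (a * r) * exp (- a * t)) has_integral exp (a*r) * (exp (-a*r)/a)) {r..}"
    by (intro has_integral_mult_right has_integral_exp_minus_to_infinity assms)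
  moreover have "exp (a*r) * (exp (-a*r)/a) = 1 / a" by (simp add: exp_minus field_simps)
  moreover have "\<And>t. exp (a * r) * exp (- a * t) = exp (- a * (t - r))"
    by (simp add: mult_exp_exp algebra_simps)
  ultimately show ?thesis by simp
qed

lemma pow_bound:
  fixes s t c :: real and j :: nat
  assumes "t > 0" "s \<ge> 0" "c > 0" "t \<ge> (2 / c) * (real j + 1)"
  shows "((t + s) / t) ^ j \<le> exp (c / 2 * s)"
proof -
  have "((t + s) / t) ^ j = (1 + s / t) ^ j" using assms by (simp add: field_simps)
  also have "\<dots> \<le> exp (s / t) ^ j"
    by (intro power_mono) (use assms in \<open>auto simp: exp_ge_add_one_self\<close>)
  also have "\<dots> = exp (real j * (s / t))" by (simp add: exp_of_nat_mult[symmetric])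
  also have "\<dots> \<le> exp (c / 2 * s)"
  proof -
    have "real j * (s / t) = s * (real j / t)" by simp
    also have "\<dots> \<le> s * (c / 2)"
    proof (intro mult_left_mono assms(2))
      have "real j \<le> (real j + 1)" by simp
      also have "\<dots> \<le> t * (c/2)" using assms(3,4) by (simp add: field_simps)
      finally show "real j / t \<le> c / 2" using assms(1) by (simp add: field_simps)
    qed
    finally show ?thesis by (simp add: mult.commute)
  qed
  finally show ?thesis .
qed

theorem lemma5p7:
  fixes a b :: real
  assumes "a > b" and "b > 0"
  shows "\<exists>C0::real. C0 > 0 \<and>
    (\<forall>(j::nat) (R::real) (\<rho>::real). R \<ge> C0 * (real j + 1) \<longrightarrow> \<rho> > 0 \<longrightarrow>
      set_nn_integral lborel {R..}
        (\<lambda>\<tau>. ennreal ((1 / \<tau> ^ j) * exp (- a * \<bar>\<rho> - \<tau>\<bar> - b * \<tau>)))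
      \<le> ennreal ((1 / a + 2 / (a - b)) * exp (- b * \<rho>) / \<rho> ^ j))"
proof (intro exI[of _ "2 / (a - b)"] conjI allI impI)
  define c where "c = a - b"
  have c: "c > 0" using assms by (simp add: c_def)
  have a: "a > 0" using assms by simp
  show "2 / (a - b) > 0" using c by (simp add: c_def)
  fix j :: nat and R \<rho> :: real
  assume R: "R \<ge> 2 / (a - b) * (real j + 1)" and rho: "\<rho> > 0"
  have Rpos: "R > 0"
    using R c unfolding c_def[symmetric]
    by (smt (verit) divide_pos_pos mult_pos_pos of_nat_0_le_iff)
  define K where "K = exp (- b * \<rho>) / \<rho> ^ j"
  have K: "K \<ge> 0" using rho by (simp add: K_def)
  define g1 where "g1 = (\<lambda>t::real. exp (- a * (t - \<rho>)))"
  define g2 where "g2 = (\<lambda>t::real. exp (- (c/2) * (\<rho> - t)))"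
  have pw: "ennreal ((1 / t ^ j) * exp (- a * \<bar>\<rho> - t\<bar> - b * t)) * indicator {R..} t
      \<le> ennreal K * (ennreal (g1 t) * indicator {\<rho>..} t + ennreal (g2 t) * indicator {..\<rho>} t)"
    for t
  proof (cases "t \<ge> R")
    case False thus ?thesis by simp
  next
    case True
    hence tpos: "t > 0" using Rpos by simp
    show ?thesis
    proof (cases "t \<ge> \<rho>")
      case True
      have "(1 / t ^ j) * exp (- a * \<bar>\<rho> - t\<bar> - b * t) \<le> K * g1 t"
      proof -
        have "1 / t ^ j \<le> 1 / \<rho> ^ j"
          using True rho tpos by (intro divide_left_mono power_mono) auto
        moreover have "exp (- a * \<bar>\<rho> - t\<bar> - b * t) \<le> exp (- b * \<rho>) * g1 t"
          unfolding g1_def mult_exp_exp using True assms by (auto simp: algebra_simps abs_if)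
        ultimately have "(1 / t ^ j) * exp (- a * \<bar>\<rho> - t\<bar> - b * t) \<le> (1 / \<rho> ^ j) * (exp (- b * \<rho>) * g1 t)"
          using rho by (intro mult_mono) auto
        thus ?thesis by (simp add: K_def)
      qed
      hence "ennreal ((1 / t ^ j) * exp (- a * \<bar>\<rho> - t\<bar> - b * t)) \<le> ennreal K * ennreal (g1 t)"
        using K by (simp add: ennreal_mult'[symmetric] ennreal_leI)
      also have "\<dots> \<le> ennreal K * (ennreal (g1 t) * indicator {\<rho>..} t + ennreal (g2 t) * indicator {..\<rho>} t)"
        using True by (intro mult_left_mono) auto
      finally show ?thesis using \<open>t \<ge> R\<close> by simp
    next
      case False
      define s where "s = \<rho> - t"
      have s: "s \<ge> 0" and rs: "\<rho> = t + s" using False by (auto simp: s_def)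
      have pb: "((t + s) / t) ^ j \<le> exp (c / 2 * s)"
        using pow_bound[OF tpos s c] \<open>t \<ge> R\<close> R by (simp add: c_def)
      have "(1 / t ^ j) * exp (- a * \<bar>\<rho> - t\<bar> - b * t) \<le> K * g2 t"
      proof -
        have e1: "exp (- a * \<bar>\<rho> - t\<bar> - b * t) = exp (- b * \<rho>) * exp (- c * s)"
          unfolding mult_exp_exp using False by (simp add: s_def c_def abs_if algebra_simps)
        have e2: "K * g2 t = exp (- b * \<rho>) * (exp (c / 2 * s) * exp (- c * s)) / \<rho> ^ j"
        proof -
          have "exp (c / 2 * s) * exp (- c * s) = exp (- (c/2) * (\<rho> - t))"
            unfolding mult_exp_exp by (rule arg_cong[where f=exp]) (simp add: s_def field_simps)
          thus ?thesis by (simp add: K_def g2_def)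
        qed
        have "1 / t ^ j \<le> exp (c / 2 * s) / \<rho> ^ j"
          using pb tpos rho by (simp add: rs power_divide field_simps)
        hence "(1 / t ^ j) * (exp (- b * \<rho>) * exp (- c * s)) \<le> exp (c / 2 * s) / \<rho> ^ j * (exp (- b * \<rho>) * exp (- c * s))"
          by (intro mult_right_mono) auto
        thus ?thesis unfolding e1 e2 by (simp add: field_simps)
      qed
      hence "ennreal ((1 / t ^ j) * exp (- a * \<bar>\<rho> - t\<bar> - b * t)) \<le> ennreal K * ennreal (g2 t)"
        using K by (simp add: ennreal_mult'[symmetric] ennreal_leI)
      also have "\<dots> \<le> ennreal K * (ennreal (g1 t) * indicator {\<rho>..} t + ennreal (g2 t) * indicator {..\<rho>} t)"
        using False by (intro mult_left_mono) auto
      finally show ?thesis using \<open>t \<ge> R\<close> by simp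
    qed
  qed
  have I1: "(\<integral>\<^sup>+t. ennreal (g1 t) * indicator {\<rho>..} t \<partial>lborel) = ennreal (1/a)"
    by (rule nn_integral_has_integral_lebesgue') (use piece1[OF a] in \<open>auto simp: g1_def\<close>)
  have I2': "(\<integral>\<^sup>+t. ennreal (exp (- (c/2) * (t - (-\<rho>)))) * indicator {-\<rho>..} t \<partial>lborel) = ennreal (1/(c/2))"
    by (rule nn_integral_has_integral_lebesgue') (use piece1[of "c/2" "-\<rho>"] c in auto)
  have eq: "ennreal (g2 (0 + -1 * t)) * indicator {..\<rho>} (0 + -1 * t)
        = ennreal (exp (- (c/2) * (t - (-\<rho>)))) * indicator {-\<rho>..} t" for t
  proof -
    have "g2 (0 + -1 * t) = exp (- (c/2) * (t - (-\<rho>)))"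
      unfolding g2_def by (rule arg_cong[where f=exp]) (simp add: algebra_simps)
    moreover have "indicator {..\<rho>} (0 + -1 * t) = (indicator {-\<rho>..} t :: ennreal)"
      by (simp add: indicator_def)
    ultimately show ?thesis by simp
  qed
  have aff: "(\<integral>\<^sup>+t. ennreal (g2 t) * indicator {..\<rho>} t \<partial>lborel)
      = ennreal \<bar>-1\<bar> * (\<integral>\<^sup>+t. ennreal (g2 (0 + -1 * t)) * indicator {..\<rho>} (0 + -1 * t) \<partial>lborel)"
    by (rule nn_integral_real_affine) (auto simp: g2_def)
  have "(\<integral>\<^sup>+t. ennreal (g2 (0 + -1 * t)) * indicator {..\<rho>} (0 + -1 * t) \<partial>lborel)
     = (\<integral>\<^sup>+t. ennreal (exp (- (c/2) * (t - (-\<rho>)))) * indicator {-\<rho>..} t \<partial>lborel)"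
    by (rule nn_integral_cong, rule eq)
  with aff I2' have I2: "(\<integral>\<^sup>+t. ennreal (g2 t) * indicator {..\<rho>} t \<partial>lborel) = ennreal (1/(c/2))"
    by simp
  have "set_nn_integral lborel {R..}
        (\<lambda>\<tau>. ennreal ((1 / \<tau> ^ j) * exp (- a * \<bar>\<rho> - \<tau>\<bar> - b * \<tau>)))
      \<le> (\<integral>\<^sup>+t. ennreal K * (ennreal (g1 t) * indicator {\<rho>..} t + ennreal (g2 t) * indicator {..\<rho>} t) \<partial>lborel)"
    by (intro nn_integral_mono pw)
  also have "\<dots> = ennreal K * ((\<integral>\<^sup>+t. ennreal (g1 t) * indicator {\<rho>..} t \<partial>lborel) + (\<integral>\<^sup>+t. ennreal (g2 t) * indicator {..\<rho>} t \<partial>lborel))"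
  proof -
    have m1: "(\<lambda>t. ennreal (g1 t) * indicator {\<rho>..} t) \<in> borel_measurable lborel"
      unfolding g1_def by measurable
    have m2: "(\<lambda>t. ennreal (g2 t) * indicator {..\<rho>} t) \<in> borel_measurable lborel"
      unfolding g2_def by measurable
    show ?thesis
      by (simp only: nn_integral_cmult[OF borel_measurable_add[OF m1 m2]] nn_integral_add[OF m1 m2])
  qed
  also have "\<dots> = ennreal (K * (1/a + 2/c))"
  proof -
    have "ennreal (1/a + 1/(c/2)) = ennreal (1/a) + ennreal (1/(c/2))"
      by (rule ennreal_plus) (use a c in auto)
    moreover have "1/(c/2) = 2/c" by simp
    ultimately have "ennreal (1/a) + ennreal (1/(c/2)) = ennreal (1/a + 2/c)" by simp
    moreover have "ennreal K * ennreal (1/a + 2/c) = ennreal (K * (1/a + 2/c))"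
      using K a c by (intro ennreal_mult[symmetric]) auto
    ultimately show ?thesis by (simp only: I1 I2)
  qed
  also have "\<dots> = ennreal ((1 / a + 2 / (a - b)) * exp (- b * \<rho>) / \<rho> ^ j)"
    by (simp add: K_def c_def mult.commute)
  finally show "set_nn_integral lborel {R..}
        (\<lambda>\<tau>. ennreal ((1 / \<tau> ^ j) * exp (- a * \<bar>\<rho> - \<tau>\<bar> - b * \<tau>)))
      \<le> ennreal ((1 / a + 2 / (a - b)) * exp (- b * \<rho>) / \<rho> ^ j)" .
qed

end
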